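(* Let $p,k\ge 0$ be integers and $n\ge (p+1)k$. For every $\alpha\in C_n(p,k)$ with $\alpha\ne\gamma_{n,k}$, the list $\mathcal{D}_p(\alpha)$ ends with $\gamma_{n,k}=0^{n-k}1^k$.
   Context: The weight of a binary word is its number of 1's. For integers $p,k\ge 0$ and $n\ge (p+1)k$, $C_n(p,k)$ is the set of binary words of length $n$ and weight $k$ such that every prefix contains at least $p$ times as many 0's as 1's (i.e. in every prefix, #0's $\ge p\cdot$ #1's). $\gamma_{n,k}=0^{n-k}1^k$. A homogeneous transposition of a binary word exchanges a 1 and a 0 such that no 1 occurs strictly between the two exchanged positions. For a set $S$ of binary words of the same length and weight and $\alpha\in S$, the list obtained by applying the greedy algorithm for $S$ to $\alpha$ is built as follows: start with the list $(\alpha)$; repeatedly, for the last word $w$ of the current list, among all words obtainable from $w$ by one homogeneous transposition that lie in $S$ and do not already occur in the list, choose the one obtained by transposing the leftmost possible 1 with (among transpositions of that 1) the leftmost possible 0, and append it; stop when no such word exists. $\mathcal{D}_p(\alpha)$ denotes the list obtained by applying the greedy algorithm for $C_n(p,k)$ to $\alpha\in C_n(p,k)$. *)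

theory Defs
  imports Main
begin

text \<open>Binary words are bool lists; True encodes the letter 1, False the letter 0.\<close>

definition weight :: "bool list \<Rightarrow> nat" where
  "weight w = count_list w True"

definition zeros :: "bool list \<Rightarrow> nat" where
  "zeros w = count_list w False"

definition Cnpk :: "nat \<Rightarrow> nat \<Rightarrow> nat \<Rightarrow> bool list set" where
  "Cnpk n p k = {w. length w = n \<and> weight w = k \<and>
      (\<forall>i \<le> length w. zeros (take i w) \<ge> p * weight (take i w))}"

definition gamma :: "nat \<Rightarrow> nat \<Rightarrow> bool list" where
  "gamma n k = replicate (n - k) False @ replicate k True"

definition swap :: "bool list \<Rightarrow> nat \<Rightarrow> nat \<Rightarrow> bool list" where
  "swap w i j = w[i := w ! j, j := w ! i]"

definition homog :: "bool list \<Rightarrow> nat \<Rightarrow> nat \<Rightarrow> bool" where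
  "homog w i j \<longleftrightarrow> i < length w \<and> j < length w \<and> w ! i \<and> \<not> w ! j \<and>
      (\<forall>m. min i j < m \<and> m < max i j \<longrightarrow> \<not> w ! m)"

definition cands :: "bool list set \<Rightarrow> bool list list \<Rightarrow> bool list \<Rightarrow> (nat \<times> nat) set" where
  "cands S L w = {(i, j). homog w i j \<and> swap w i j \<in> S \<and> swap w i j \<notin> set L}"

definition greedy_step :: "bool list set \<Rightarrow> bool list list \<Rightarrow> bool list list" where
  "greedy_step S L =
     (let w = last L; C = cands S L w in
      if C = {} then L
      else (let i0 = (LEAST i. \<exists>j. (i, j) \<in> C);
                j0 = (LEAST j. (i0, j) \<in> C)
            in L @ [swap w i0 j0]))"

text \<open>The greedy list: each step appends a new word of the finite set S, so
  after card S steps the process has stopped.\<close>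
definition greedy :: "bool list set \<Rightarrow> bool list \<Rightarrow> bool list list" where
  "greedy S \<alpha> = (greedy_step S ^^ card S) [\<alpha>]"

definition Dp :: "nat \<Rightarrow> nat \<Rightarrow> nat \<Rightarrow> bool list \<Rightarrow> bool list list" where
  "Dp n p k \<alpha> = greedy (Cnpk n p k) \<alpha>"

end

theory Submission
  imports Defs
begin

lemma count_update:
  "i < length xs \<Longrightarrow> count_list (xs[i:=y]) x + (if xs!i = x then 1 else 0)
     = count_list xs x + (if y = x then 1 else 0)"
proof (induction xs arbitrary: i)
  case Nil then show ?case by simp
next
  case (Cons a xs)
  show ?case
  proof (cases i)
    case 0 then show ?thesis by auto
  next
    case (Suc j) then show ?thesis using Cons.IH[of j] Cons.prems by auto
  qed
qed

lemma count_FT: "count_list xs False + count_list xs True = length (xs::bool list)"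
  by (induction xs) auto

lemma zeros_weight: "zeros xs = length xs - weight xs"
  using count_FT[of xs] unfolding zeros_def weight_def by simp

lemma weight_le_len: "weight xs \<le> length xs"
  unfolding weight_def by (rule count_le_length)

lemma swap_eq: "w!i \<Longrightarrow> \<not> w!e \<Longrightarrow> swap w i e = w[i:=False, e:=True]"
  unfolding swap_def by simp

lemma weight_take_swap:
  assumes "i < e" "e < length w" "w!i" "\<not> w!e"
  shows "weight (take l (swap w i e)) \<le> weight (take l w)"
    and "length (swap w i e) = length w"
proof -
  have s: "take l (swap w i e) = (take l w)[i:=False, e:=True]"
    using swap_eq[OF assms(3,4)] by (simp add: take_update_swap)
  show "weight (take l (swap w i e)) \<le> weight (take l w)"
  proof (cases "l \<le> i")
    case True then show ?thesis using s assms by (simp add: list_update_beyond)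
  next
    case False
    have ti: "(take l w)!i" using False assms by simp
    have c1: "count_list ((take l w)[i:=False]) True + 1 = count_list (take l w) True"
      using count_update[of i "take l w" False True] ti False assms by simp
    show ?thesis
    proof (cases "e < l")
      case True
      have "e < length ((take l w)[i:=False])" using True assms by simp
      moreover have "\<not> ((take l w)[i:=False])!e" using True assms by simp
      ultimately have "count_list ((take l w)[i:=False, e:=True]) True
          = count_list ((take l w)[i:=False]) True + 1"
        using count_update[of e "(take l w)[i:=False]" True True] by simp
      then show ?thesis using s c1 unfolding weight_def by simp
    next
      case f2: False
      have "(take l w)[i:=False, e:=True] = (take l w)[i:=False]"
        using f2 by (simp add: list_update_beyond)
      then show ?thesis using s c1 unfolding weight_def by simp
    qed
  qed
  show "length (swap w i e) = length w" unfolding swap_def by simp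
qed

lemma move_right_C:
  assumes "w \<in> Cnpk n p k" "i < e" "e < length w" "w!i" "\<not> w!e"
  shows "swap w i e \<in> Cnpk n p k"
proof -
  let ?w = "swap w i e"
  have len: "length ?w = length w" using weight_take_swap assms by blast
  have wt: "\<And>l. weight (take l ?w) \<le> weight (take l w)"
    using weight_take_swap(1)[OF assms(2-5)] .
  have tot: "weight ?w = weight w"
  proof -
    have "weight (take (length w) ?w) \<le> weight (take (length w) w)" by (rule wt)
    moreover have "weight w \<le> weight ?w"
    proof -
      have "?w = w[i:=False, e:=True]" using swap_eq assms by simp
      have c1: "count_list (w[i:=False]) True + 1 = count_list w True"
        using count_update[of i w False True] assms by simp
      have "count_list (w[i:=False, e:=True]) True = count_list (w[i:=False]) True + 1"
        using count_update[of e "w[i:=False]" True True] assms by simp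
      then show ?thesis using c1 swap_eq assms unfolding weight_def by simp
    qed
    ultimately show ?thesis using len by simp
  qed
  have "\<forall>l \<le> length ?w. zeros (take l ?w) \<ge> p * weight (take l ?w)"
  proof (intro allI impI)
    fix l assume l: "l \<le> length ?w"
    have a: "zeros (take l w) \<ge> p * weight (take l w)" using assms(1) l len
      unfolding Cnpk_def by auto
    have "length (take l ?w) = length (take l w)" using len by simp
    then have "zeros (take l ?w) \<ge> zeros (take l w)"
      using wt[of l] unfolding zeros_weight by simp
    moreover have "p * weight (take l ?w) \<le> p * weight (take l w)" using wt[of l] by simp
    ultimately show "zeros (take l ?w) \<ge> p * weight (take l ?w)" using a by linarith
  qed
  then show ?thesis using assms(1) len tot unfolding Cnpk_def by auto
qed

lemma sorted_bool:
  "(\<forall>i. Suc i < length w \<longrightarrow> \<not> (w!i \<and> \<not> w!Suc i)) \<Longrightarrow>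
    w = replicate (count_list w False) False @ replicate (count_list w True) True"
proof (induction w)
  case Nil then show ?case by simp
next
  case (Cons a xs)
  have h: "\<forall>i. Suc i < length xs \<longrightarrow> \<not> (xs!i \<and> \<not> xs!Suc i)"
  proof (intro allI impI)
    fix i assume "Suc i < length xs"
    then show "\<not> (xs!i \<and> \<not> xs!Suc i)" using Cons.prems[rule_format, of "Suc i"] by simp
  qed
  have IH: "xs = replicate (count_list xs False) False @ replicate (count_list xs True) True"
    using Cons.IH h by blast
  show ?case
  proof (cases a)
    case False then show ?thesis using IH by simp
  next
    case True
    have "count_list xs False = 0"
    proof (rule ccontr)
      assume a: "count_list xs False \<noteq> 0"
      then obtain c where c: "count_list xs False = Suc c" using not0_implies_Suc by blast
      then have "xs = False # (replicate c False @ replicate (count_list xs True) True)"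
        using IH by simp
      then have "xs!0 = False" "0 < length xs" by (metis nth_Cons_0, metis length_Cons zero_less_Suc)
      then show False using Cons.prems[rule_format, of 0] True by simp
    qed
    then show ?thesis using IH True by simp
  qed
qed

lemma gamma_len: "k \<le> n \<Longrightarrow> length (gamma n k) = n"
  unfolding gamma_def by simp

lemma gamma_nth: "k \<le> n \<Longrightarrow> q < n \<Longrightarrow> gamma n k ! q = (n - k \<le> q)"
  unfolding gamma_def by (simp add: nth_append)

lemma non_gamma_10:
  assumes "w \<in> Cnpk n p k" "w \<noteq> gamma n k"
  shows "\<exists>i. Suc i < length w \<and> w!i \<and> \<not> w!Suc i"
proof (rule ccontr)
  assume "\<not> ?thesis"
  then have "w = replicate (count_list w False) False @ replicate (count_list w True) True"
    using sorted_bool by blast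
  moreover have "count_list w True = k" "length w = n" using assms unfolding Cnpk_def weight_def by auto
  moreover have "count_list w False = n - k" using count_FT[of w] calculation by simp
  ultimately have "w = gamma n k" unfolding gamma_def by simp
  then show False using assms by simp
qed

lemma upd_lem: "a \<noteq> b \<Longrightarrow> \<not> xs!b \<Longrightarrow> xs[a:=x, b:=y, b:=False] = xs[a:=x]"
proof -
  assume ab: "a \<noteq> b" and nb: "\<not> xs!b"
  have "xs[a:=x, b:=y, b:=False] = xs[a:=x, b:=False]" by simp
  also have "\<dots> = xs[b:=False, a:=x]" using ab by (simp add: list_update_swap)
  also have "xs[b:=False] = xs" using nb by (metis list_update_id)
  finally show ?thesis by simp
qed

lemma gamma_stuck:
  assumes kn: "k \<le> n" and L: "L \<noteq> []" and lw: "length (last L) = n"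
    and C: "(i0, j0) \<in> cands S L (last L)"
    and minj: "\<forall>j. (i0, j) \<in> cands S L (last L) \<longrightarrow> j0 \<le> j"
    and g: "swap (last L) i0 j0 = gamma n k"
  shows "cands S (L @ [gamma n k]) (gamma n k) = {}"
proof -
  let ?w = "last L" let ?g = "gamma n k"
  have wL: "?w \<in> set L" using L by simp
  have h: "homog ?w i0 j0" using C unfolding cands_def by simp
  then have hi: "i0 < n" "j0 < n" "?w!i0" "\<not> ?w!j0"
    and hb: "\<And>m. min i0 j0 < m \<Longrightarrow> m < max i0 j0 \<Longrightarrow> \<not> ?w!m"
    using lw unfolding homog_def by auto
  have ij: "i0 \<noteq> j0" using hi by auto
  have gdef: "?g = ?w[i0:=False, j0:=True]" using g swap_eq[of ?w i0 j0] hi by simp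
  have gn: "\<And>q. q < n \<Longrightarrow> ?g!q = (n - k \<le> q)" using gamma_nth kn by blast
  have gw: "\<And>q. q \<noteq> i0 \<Longrightarrow> q \<noteq> j0 \<Longrightarrow> ?g!q = ?w!q" using gdef by simp
  have "?g!j0" using gdef hi lw by simp
  then have j0k: "n - k \<le> j0" using gn hi by simp
  have "\<not> ?g!i0" using gdef hi lw ij by simp
  then have i0k: "i0 < n - k" using gn hi by simp
  have j0e: "j0 = n - k"
  proof (rule ccontr)
    assume "j0 \<noteq> n - k"
    then have "n - k < j0" using j0k by simp
    then have "\<not> ?w!(n-k)" using hb[of "n-k"] i0k by simp
    moreover have "?g!(n-k) = ?w!(n-k)" using gw i0k \<open>n - k < j0\<close> by simp
    moreover have "?g!(n-k)" using gn[of "n-k"] \<open>n - k < j0\<close> hi(2) by simp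
    ultimately show False by simp
  qed
  show ?thesis
  proof (rule ccontr)
    assume "cands S (L @ [?g]) ?g \<noteq> {}"
    then obtain i j where c2: "(i,j) \<in> cands S (L @ [?g]) ?g" by auto
    then have h2: "homog ?g i j" and sS: "swap ?g i j \<in> S" and sL: "swap ?g i j \<notin> set (L @ [?g])"
      unfolding cands_def by auto
    have glen: "length ?g = n" using gamma_len kn by simp
    from h2 have i2: "i < n" "j < n" "?g!i" "\<not> ?g!j"
      and hb2: "\<And>m. min i j < m \<Longrightarrow> m < max i j \<Longrightarrow> \<not> ?g!m"
      unfolding homog_def using glen by auto
    have ik: "n - k \<le> i" using gn i2 by simp
    have jk: "j < n - k" using gn i2 by simp
    have ie: "i = n - k"
    proof (rule ccontr)
      assume "i \<noteq> n - k"
      then have "\<not> ?g!(n-k)" using hb2[of "n-k"] ik jk by simp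
      then show False using gn i2 jk by simp
    qed
    show False
    proof (cases "j = i0")
      case True
      have "swap ?g i j = ?g[j0 := False, i0 := True]"
        unfolding swap_def using True ie j0e \<open>?g!j0\<close> \<open>\<not> ?g!i0\<close> by simp
      also have "\<dots> = ?w[i0:=False, j0:=True, j0:=False, i0:=True]" by (simp only: gdef)
      also have "\<dots> = ?w[i0:=False, i0:=True]" by (simp only: upd_lem[OF ij hi(4)])
      also have "\<dots> = ?w" using hi(3) by (metis list_update_id list_update_overwrite)
      finally have "swap ?g i j = ?w" .
      then show False using sL wL by simp
    next
      case False
      have jj0: "j \<noteq> j0" using jk j0e by simp
      have wj: "\<not> ?w!j" using gw[OF False jj0] i2 by simp
      have gj: "\<not> ?g!j" using i2 by simp
      have "swap ?g i j = ?g[j0 := False, j := True]"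
        unfolding swap_def using ie j0e gj \<open>?g!j0\<close> by simp
      also have "\<dots> = ?w[i0:=False, j0:=True, j0:=False, j:=True]" by (simp only: gdef)
      also have "\<dots> = ?w[i0:=False, j := True]" by (simp only: upd_lem[OF ij hi(4)])
      also have "\<dots> = swap ?w i0 j" unfolding swap_def using wj hi by simp
      finally have eq: "swap ?g i j = swap ?w i0 j" .
      have "homog ?w i0 j"
        unfolding homog_def
      proof (intro conjI allI impI)
        show "i0 < length ?w" "j < length ?w" "?w!i0" "\<not> ?w!j" using hi lw i2 wj by auto
        fix m assume m: "min i0 j < m \<and> m < max i0 j"
        then have "m < n - k" using i0k jk by (simp add: max_def split: if_splits)
        then have "m \<noteq> i0" "m \<noteq> j0" "m < n" using m j0e i2 by auto
        then show "\<not> ?w!m" using gw gn \<open>m < n - k\<close> by force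
      qed
      then have "(i0, j) \<in> cands S L ?w" using sS sL eq unfolding cands_def by auto
      then have "j0 \<le> j" using minj by blast
      then show False using jk j0e by simp
    qed
  qed
qed

definition ao :: "nat \<Rightarrow> bool list \<Rightarrow> bool" where
  "ao m v \<longleftrightarrow> m \<le> length v \<and> (\<forall>q. length v - m \<le> q \<longrightarrow> q < length v \<longrightarrow> v!q)"

definition tinv :: "bool list list \<Rightarrow> bool" where
  "tinv L \<longleftrightarrow> (\<forall>v\<in>set L. \<forall>m. ao m v \<longrightarrow> ao m (last L))"

lemma step_lemma:
  assumes kn: "k \<le> n" and L: "L \<noteq> []" and sub: "set L \<subseteq> Cnpk n p k"
    and ng: "last L \<noteq> gamma n k" and ti: "tinv L"
  shows "\<exists>w'. greedy_step (Cnpk n p k) L = L @ [w'] \<and> w' \<in> Cnpk n p k \<and> w' \<notin> set L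
     \<and> tinv (L @ [w']) \<and> (w' = gamma n k \<longrightarrow> cands (Cnpk n p k) (L @ [w']) w' = {})"
proof -
  let ?S = "Cnpk n p k" let ?w = "last L"
  define C where "C = cands ?S L ?w"
  have wS: "?w \<in> ?S" using L sub by auto
  then have lw: "length ?w = n" unfolding Cnpk_def by simp
  obtain r0 where r0: "Suc r0 < n" "?w!r0" "\<not> ?w!Suc r0"
    using non_gamma_10[OF wS ng] lw by auto
  define z where "z = (GREATEST q. q < n \<and> \<not> ?w!q)"
  have zP: "z < n \<and> \<not> ?w!z" unfolding z_def
    by (rule GreatestI_nat[where k="Suc r0" and b=n]) (use r0 in auto)
  have zmax: "\<And>q. q < n \<Longrightarrow> \<not> ?w!q \<Longrightarrow> q \<le> z" unfolding z_def
    by (rule Greatest_le_nat[where b=n]) auto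
  have r0z: "Suc r0 \<le> z" using zmax r0 by simp
  define \<rho> where "\<rho> = (GREATEST q. q < z \<and> ?w!q)"
  have rP: "\<rho> < z \<and> ?w!\<rho>" unfolding \<rho>_def
    by (rule GreatestI_nat[where k=r0 and b=z]) (use r0 r0z in auto)
  have rmax: "\<And>q. q < z \<Longrightarrow> ?w!q \<Longrightarrow> q \<le> \<rho>" unfolding \<rho>_def
    by (rule Greatest_le_nat[where b=z]) auto
  have hom: "homog ?w \<rho> z" unfolding homog_def
  proof (intro conjI allI impI)
    show "\<rho> < length ?w" "z < length ?w" "?w!\<rho>" "\<not> ?w!z" using rP zP lw by auto
    fix m assume "min \<rho> z < m \<and> m < max \<rho> z"
    then have "\<rho> < m" "m < z" using rP by auto
    then show "\<not> ?w!m" using rmax by force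
  qed
  have NS: "swap ?w \<rho> z \<in> ?S" using move_right_C[OF wS] rP zP lw by simp
  have NL: "swap ?w \<rho> z \<notin> set L"
  proof
    assume a: "swap ?w \<rho> z \<in> set L"
    have "ao (n - z) (swap ?w \<rho> z)" unfolding ao_def
    proof (intro conjI allI impI)
      show "n - z \<le> length (swap ?w \<rho> z)" unfolding swap_def using lw by simp
      fix q assume q: "length (swap ?w \<rho> z) - (n - z) \<le> q" "q < length (swap ?w \<rho> z)"
      then have q2: "z \<le> q" "q < n" unfolding swap_def using lw zP by auto
      show "swap ?w \<rho> z ! q"
      proof (cases "q = z")
        case True then show ?thesis unfolding swap_def using rP lw q2 by simp
      next
        case False
        then have "z < q" using q2 by simp
        then have "?w!q" using zmax q2 by force
        then show ?thesis unfolding swap_def using False rP \<open>z < q\<close> by simp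
      qed
    qed
    then have "ao (n - z) ?w" using ti a unfolding tinv_def by blast
    then show False unfolding ao_def using lw zP by auto
  qed
  have rC: "(\<rho>, z) \<in> C" unfolding C_def cands_def using hom NS NL by simp
  define i0 where "i0 = (LEAST i. \<exists>j. (i, j) \<in> C)"
  define j0 where "j0 = (LEAST j. (i0, j) \<in> C)"
  have i0r: "i0 \<le> \<rho>" unfolding i0_def using rC by (metis (mono_tags, lifting) Least_le)
  have ex0: "\<exists>i. \<exists>j. (i, j) \<in> C" using rC by blast
  have ex: "\<exists>j. (i0, j) \<in> C" unfolding i0_def using LeastI_ex[OF ex0] .
  have iC: "(i0, j0) \<in> C" unfolding j0_def using LeastI_ex[OF ex] .
  have minj: "\<forall>j. (i0, j) \<in> C \<longrightarrow> j0 \<le> j" unfolding j0_def by (simp add: Least_le)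
  have Cne: "C \<noteq> {}" using rC by auto
  define w' where "w' = swap ?w i0 j0"
  have gs: "greedy_step ?S L = L @ [w']"
    unfolding greedy_step_def Let_def w'_def j0_def i0_def
    using Cne unfolding C_def by simp
  have wS': "w' \<in> ?S" and wL': "w' \<notin> set L" and hom0: "homog ?w i0 j0"
    using iC unfolding w'_def C_def cands_def by auto
  have j0z: "j0 \<le> z" using hom0 zmax lw unfolding homog_def by auto
  have ti': "tinv (L @ [w'])" unfolding tinv_def
  proof (intro ballI allI impI)
    fix v m assume v: "v \<in> set (L @ [w'])" and am: "ao m v"
    show "ao m (last (L @ [w']))"
    proof (cases "v = w'")
      case True then show ?thesis using am by simp
    next
      case False
      then have "v \<in> set L" using v by simp
      then have aw: "ao m ?w" using ti am unfolding tinv_def by blast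
      then have "z < n - m" using zP lw unfolding ao_def by (metis not_le)
      then have lt: "i0 < n - m" "j0 < n - m" using i0r j0z rP by auto
      show ?thesis unfolding ao_def
      proof (intro conjI allI impI)
        show "m \<le> length (last (L @ [w']))" using aw lw unfolding ao_def w'_def swap_def by simp
        fix q assume q: "length (last (L @ [w'])) - m \<le> q" "q < length (last (L @ [w']))"
        then have q2: "n - m \<le> q" "q < n" using lw unfolding w'_def swap_def by auto
        then have "?w!q" using aw lw unfolding ao_def by simp
        then show "last (L @ [w']) ! q" using q2 lt unfolding w'_def swap_def by simp
      qed
    qed
  qed
  have gst: "w' = gamma n k \<longrightarrow> cands ?S (L @ [w']) w' = {}"
    using gamma_stuck[OF kn L lw, of i0 j0 ?S] iC minj unfolding C_def w'_def by auto
  show ?thesis using gs wS' wL' ti' gst by blast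
qed

lemma stuck_step: "cands S L (last L) = {} \<Longrightarrow> greedy_step S L = L"
  unfolding greedy_step_def Let_def by simp

lemma iter:
  assumes kn: "k \<le> n" and aS: "\<alpha> \<in> Cnpk n p k" and ag: "\<alpha> \<noteq> gamma n k"
  shows "let L = (greedy_step (Cnpk n p k) ^^ m) [\<alpha>] in
    L \<noteq> [] \<and> distinct L \<and> set L \<subseteq> Cnpk n p k \<and>
    ((last L \<noteq> gamma n k \<and> tinv L \<and> length L = Suc m) \<or>
     (last L = gamma n k \<and> cands (Cnpk n p k) L (last L) = {}))"
proof (induction m)
  case 0
  then show ?case using aS ag unfolding tinv_def by simp
next
  case (Suc m)
  define L where "L = (greedy_step (Cnpk n p k) ^^ m) [\<alpha>]"
  have IH: "L \<noteq> [] \<and> distinct L \<and> set L \<subseteq> Cnpk n p k \<and>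
    ((last L \<noteq> gamma n k \<and> tinv L \<and> length L = Suc m) \<or>
     (last L = gamma n k \<and> cands (Cnpk n p k) L (last L) = {}))"
    using Suc.IH unfolding L_def Let_def .
  have eq: "(greedy_step (Cnpk n p k) ^^ Suc m) [\<alpha>] = greedy_step (Cnpk n p k) L"
    unfolding L_def by simp
  show ?case
  proof (cases "last L = gamma n k \<and> cands (Cnpk n p k) L (last L) = {}")
    case True
    then show ?thesis unfolding eq Let_def using stuck_step[of "Cnpk n p k" L] IH by simp
  next
    case False
    then have c1: "last L \<noteq> gamma n k" "tinv L" "length L = Suc m" using IH by auto
    obtain w' where w': "greedy_step (Cnpk n p k) L = L @ [w']" "w' \<in> Cnpk n p k" "w' \<notin> set L"
      "tinv (L @ [w'])" "w' = gamma n k \<longrightarrow> cands (Cnpk n p k) (L @ [w']) w' = {}"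
      using step_lemma[OF kn _ _ c1(1,2)] IH by blast
    show ?thesis unfolding eq Let_def w'(1) using IH w' c1 by auto
  qed
qed

theorem lemma3:
  fixes n p k :: nat and \<alpha> :: "bool list"
  assumes "n \<ge> (p + 1) * k"
    and "\<alpha> \<in> Cnpk n p k"
    and "\<alpha> \<noteq> gamma n k"
  shows "last (Dp n p k \<alpha>) = gamma n k"
proof -
  have kn: "k \<le> n" using assms(1) by (metis le_add2 mult_le_mono1 mult_1 add.commute order_trans)
  let ?S = "Cnpk n p k"
  have fin: "finite ?S"
  proof -
    have "?S \<subseteq> {xs. set xs \<subseteq> UNIV \<and> length xs = n}" unfolding Cnpk_def by auto
    moreover have "finite {xs::bool list. set xs \<subseteq> UNIV \<and> length xs = n}"
      by (rule finite_lists_length_eq) simp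
    ultimately show ?thesis by (rule finite_subset)
  qed
  define L where "L = (greedy_step ?S ^^ card ?S) [\<alpha>]"
  have I: "L \<noteq> [] \<and> distinct L \<and> set L \<subseteq> ?S \<and>
    ((last L \<noteq> gamma n k \<and> tinv L \<and> length L = Suc (card ?S)) \<or>
     (last L = gamma n k \<and> cands ?S L (last L) = {}))"
    using iter[OF kn assms(2,3), of "card ?S"] unfolding L_def Let_def .
  have "length L \<le> card ?S"
  proof -
    have "length L = card (set L)" using I by (simp add: distinct_card)
    also have "\<dots> \<le> card ?S" using I fin by (simp add: card_mono)
    finally show ?thesis .
  qed
  then have "last L = gamma n k" using I by auto
  then show ?thesis unfolding Dp_def greedy_def L_def .
qed

end
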